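(* Let $X$ be a strictly systolic angled complex, let $v$ be a vertex of $X$ and let $\sigma$ be a simple cycle in $\mathrm{lk}(v)$. Then either the angular length $\sum_{c\in\sigma} w(c)$ of $\sigma$ is $\geq 2\pi$, or $\sigma$ is the boundary of a triangulated disk without interior vertices all of whose edges are edges of $\mathrm{lk}(v)$.
   Context: A quasi-simplicial complex is a simplicial complex in which multiple edges between two vertices are allowed, but loops are not allowed and no two distinct edges of a 2-simplex coincide (no 2-simplex has two or more edges in common with another in the sense that a 2-simplex's boundary edges are distinct); complexes are locally finite. It is 3-flag if whenever it contains three faces of a tetrahedron (3-simplex) it contains the whole tetrahedron. For a vertex $v$, $\mathrm{lk}(v)$ denotes the geometric link of $v$ in the 2-skeleton $X^{(2)}$: a graph whose vertices correspond to edges of $X$ at $v$ and whose edges correspond to corners (at $v$) of 2-simplices containing $v$. An angled complex is such an $X$ together with a weight function $w$ assigning a nonnegative real number to each corner of each 2-simplex (equivalently, to each edge of each vertex link), with finite image, satisfying the weak triangle inequality: for every vertex $v$ and vertices $v_1,v_2,v_3$ of $\mathrm{lk}(v)$ joined by edges $\alpha_{12},\alpha_{23},\alpha_{13}$ of $\mathrm{lk}(v)$ ($\alpha_{ij}$ from $v_i$ to $v_j$), $w(\alpha_{13})\le w(\alpha_{12})+w(\alpha_{23})$. The angular length of a path in a vertex link is the sum of the weights of its edges. A simple cycle of length greater than 3 in $\mathrm{lk}(v)$ is 2-full if no edge of $\mathrm{lk}(v)$ connects two vertices of the cycle having a common neighbour in the cycle. $X$ is locally $2\pi$-large if every 2-full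 cycle in every vertex link has angular length $\geq 2\pi$. A strictly systolic angled complex is a simply connected, locally $2\pi$-large, 3-flag angled quasi-simplicial complex in which the sum of the three weights of each 2-simplex is strictly less than $\pi$. *)

theory Defs
  imports Complex_Main
begin

text \<open>Simplices are abstract objects (so that multiple edges / triangles with the
same vertex sets are allowed).  Simplices of dimension > 3
play no role in any of the notions below and are omitted.\<close>

record ('v, 'e, 't, 'h) qcomplex =
  verts  :: "'v set"
  edges  :: "'e set"
  tris   :: "'t set"
  tets   :: "'h set"
  ends   :: "'e \<Rightarrow> 'v set"
  tedges :: "'t \<Rightarrow> 'e set"
  hfaces :: "'h \<Rightarrow> 't set"

definition tverts :: "('v, 'e, 't, 'h) qcomplex \<Rightarrow> 't \<Rightarrow> 'v set" where
  "tverts X t = \<Union> (ends X ` tedges X t)"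

definition hverts :: "('v, 'e, 't, 'h) qcomplex \<Rightarrow> 'h \<Rightarrow> 'v set" where
  "hverts X h = \<Union> (tverts X ` hfaces X h)"

definition quasi_simplicial :: "('v, 'e, 't, 'h) qcomplex \<Rightarrow> bool" where
  "quasi_simplicial X \<longleftrightarrow>
     (\<forall>e\<in>edges X. ends X e \<subseteq> verts X \<and> card (ends X e) = 2) \<and>
     (\<forall>t\<in>tris X. tedges X t \<subseteq> edges X \<and> card (tedges X t) = 3 \<and>
                 inj_on (ends X) (tedges X t) \<and> card (tverts X t) = 3) \<and>
     (\<forall>t1\<in>tris X. \<forall>t2\<in>tris X. t1 \<noteq> t2 \<longrightarrow> card (tedges X t1 \<inter> tedges X t2) \<le> 1) \<and>
     (\<forall>h\<in>tets X. hfaces X h \<subseteq> tris X \<and> card (hfaces X h) = 4 \<and>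
        (\<forall>f\<in>hfaces X h. \<forall>g\<in>hfaces X h. f \<noteq> g \<longrightarrow> card (tedges X f \<inter> tedges X g) = 1) \<and>
        card (\<Union> (tedges X ` hfaces X h)) = 6 \<and> card (hverts X h) = 4) \<and>
     (\<forall>x\<in>verts X. finite {e\<in>edges X. x \<in> ends X e} \<and>
                   finite {t\<in>tris X. x \<in> tverts X t} \<and>
                   finite {h\<in>tets X. x \<in> hverts X h})"

definition three_flag :: "('v, 'e, 't, 'h) qcomplex \<Rightarrow> bool" where
  "three_flag X \<longleftrightarrow>
     (\<forall>t1\<in>tris X. \<forall>t2\<in>tris X. \<forall>t3\<in>tris X. \<forall>e12 e13 e23.
        t1 \<noteq> t2 \<and> t1 \<noteq> t3 \<and> t2 \<noteq> t3 \<and>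
        tedges X t1 \<inter> tedges X t2 = {e12} \<and>
        tedges X t1 \<inter> tedges X t3 = {e13} \<and>
        tedges X t2 \<inter> tedges X t3 = {e23} \<and>
        e12 \<noteq> e13 \<and> e12 \<noteq> e23 \<and> e13 \<noteq> e23 \<and>
        card (tverts X t1 \<union> tverts X t2 \<union> tverts X t3) = 4
        \<longrightarrow> (\<exists>h\<in>tets X. {t1, t2, t3} \<subseteq> hfaces X h))"

text \<open>The corner of triangle t at vertex x is an edge of lk(x) joining the link
vertices e1, e2 (the two edges of t at x).\<close>

definition link_edge :: "('v, 'e, 't, 'h) qcomplex \<Rightarrow> 'v \<Rightarrow> 't \<Rightarrow> 'e \<Rightarrow> 'e \<Rightarrow> bool" where
  "link_edge X x t e1 e2 \<longleftrightarrow>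
     t \<in> tris X \<and> x \<in> tverts X t \<and> e1 \<in> tedges X t \<and> e2 \<in> tedges X t \<and>
     e1 \<noteq> e2 \<and> x \<in> ends X e1 \<and> x \<in> ends X e2"

definition link_adj :: "('v, 'e, 't, 'h) qcomplex \<Rightarrow> 'v \<Rightarrow> 'e \<Rightarrow> 'e \<Rightarrow> bool" where
  "link_adj X x e1 e2 \<longleftrightarrow> (\<exists>t. link_edge X x t e1 e2)"

definition link_cycle ::
  "('v, 'e, 't, 'h) qcomplex \<Rightarrow> 'v \<Rightarrow> 'e list \<Rightarrow> 't list \<Rightarrow> bool" where
  "link_cycle X x es ts \<longleftrightarrow>
     3 \<le> length es \<and> length ts = length es \<and> distinct es \<and>
     (\<forall>i < length es. link_edge X x (ts ! i) (es ! i) (es ! ((i + 1) mod length es)))"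

definition angular_length :: "('t \<Rightarrow> 'v \<Rightarrow> real) \<Rightarrow> 'v \<Rightarrow> 't list \<Rightarrow> real" where
  "angular_length w x ts = sum_list (map (\<lambda>t. w t x) ts)"

definition cyc_nbr :: "nat \<Rightarrow> nat \<Rightarrow> nat \<Rightarrow> bool" where
  "cyc_nbr n i k \<longleftrightarrow> k = (i + 1) mod n \<or> i = (k + 1) mod n"

definition two_full :: "('v, 'e, 't, 'h) qcomplex \<Rightarrow> 'v \<Rightarrow> 'e list \<Rightarrow> bool" where
  "two_full X x es \<longleftrightarrow>
     3 < length es \<and>
     (\<forall>i j k. i < length es \<and> j < length es \<and> k < length es \<and> i \<noteq> j \<and>
        cyc_nbr (length es) i k \<and> cyc_nbr (length es) j k
        \<longrightarrow> \<not> link_adj X x (es ! i) (es ! j))"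

text \<open>w t x is the weight of the corner of the triangle t at its vertex x.\<close>

definition angled :: "('v, 'e, 't, 'h) qcomplex \<Rightarrow> ('t \<Rightarrow> 'v \<Rightarrow> real) \<Rightarrow> bool" where
  "angled X w \<longleftrightarrow>
     (\<forall>t\<in>tris X. \<forall>x\<in>tverts X t. 0 \<le> w t x) \<and>
     finite {w t x | t x. t \<in> tris X \<and> x \<in> tverts X t} \<and>
     (\<forall>x\<in>verts X. \<forall>t12 t23 t13 e1 e2 e3.
        link_edge X x t12 e1 e2 \<and> link_edge X x t23 e2 e3 \<and> link_edge X x t13 e1 e3
        \<longrightarrow> w t13 x \<le> w t12 x + w t23 x)"

definition locally_2pi_large :: "('v, 'e, 't, 'h) qcomplex \<Rightarrow> ('t \<Rightarrow> 'v \<Rightarrow> real) \<Rightarrow> bool" where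
  "locally_2pi_large X w \<longleftrightarrow>
     (\<forall>x\<in>verts X. \<forall>es ts. link_cycle X x es ts \<and> two_full X x es
        \<longrightarrow> 2 * pi \<le> angular_length w x ts)"

definition edge_path :: "('v, 'e, 't, 'h) qcomplex \<Rightarrow> ('v \<times> 'e \<times> 'v) list \<Rightarrow> bool" where
  "edge_path X p \<longleftrightarrow>
     (\<forall>(a, e, b) \<in> set p. e \<in> edges X \<and> ends X e = {a, b}) \<and>
     (\<forall>i. Suc i < length p \<longrightarrow> snd (snd (p ! i)) = fst (p ! Suc i))"

inductive htpy_step :: "('v, 'e, 't, 'h) qcomplex \<Rightarrow> ('v \<times> 'e \<times> 'v) list \<Rightarrow> ('v \<times> 'e \<times> 'v) list \<Rightarrow> bool"
  for X where
  backtrack: "edge_path X (p @ [(a, e, b), (b, e, a)] @ q) \<Longrightarrow>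
      htpy_step X (p @ [(a, e, b), (b, e, a)] @ q) (p @ q)"
| triangle: "\<lbrakk> t \<in> tris X; tedges X t = {e, e1, e2}; e \<noteq> e1; e \<noteq> e2; e1 \<noteq> e2;
      ends X e1 = {a, c}; ends X e2 = {c, b}; edge_path X (p @ [(a, e, b)] @ q) \<rbrakk> \<Longrightarrow>
      htpy_step X (p @ [(a, e, b)] @ q) (p @ [(a, e1, c), (c, e2, b)] @ q)"

definition edge_htpc :: "('v, 'e, 't, 'h) qcomplex \<Rightarrow> ('v \<times> 'e \<times> 'v) list \<Rightarrow> ('v \<times> 'e \<times> 'v) list \<Rightarrow> bool" where
  "edge_htpc X = (\<lambda>p q. htpy_step X p q \<or> htpy_step X q p)\<^sup>*\<^sup>*"

definition simply_connected_cplx :: "('v, 'e, 't, 'h) qcomplex \<Rightarrow> bool" where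
  "simply_connected_cplx X \<longleftrightarrow>
     verts X \<noteq> {} \<and>
     (\<forall>a\<in>verts X. \<forall>b\<in>verts X. \<exists>p. edge_path X p \<and>
        ((p = [] \<and> a = b) \<or> (p \<noteq> [] \<and> fst (hd p) = a \<and> snd (snd (last p)) = b))) \<and>
     (\<forall>p. edge_path X p \<and> p \<noteq> [] \<and> fst (hd p) = snd (snd (last p)) \<longrightarrow> edge_htpc X p [])"

definition strictly_systolic_angled :: "('v, 'e, 't, 'h) qcomplex \<Rightarrow> ('t \<Rightarrow> 'v \<Rightarrow> real) \<Rightarrow> bool" where
  "strictly_systolic_angled X w \<longleftrightarrow>
     quasi_simplicial X \<and> angled X w \<and> simply_connected_cplx X \<and>
     locally_2pi_large X w \<and> three_flag X \<and>
     (\<forall>t\<in>tris X. (\<Sum>x\<in>tverts X t. w t x) < pi)"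

text \<open>disk_filled G xs: the cycle xs (distinct vertices, cyclic order) is the
boundary of a triangulated disk without interior vertices (i.e. a triangulated
polygon) all of whose edges are G-edges: either xs is a G-triangle, or some
diagonal (chord) of xs is a G-edge cutting it into two such filled cycles.\<close>

inductive disk_filled :: "('a \<Rightarrow> 'a \<Rightarrow> bool) \<Rightarrow> 'a list \<Rightarrow> bool" for G where
  tri: "\<lbrakk> length xs = 3; G (xs ! 0) (xs ! 1); G (xs ! 1) (xs ! 2); G (xs ! 2) (xs ! 0) \<rbrakk>
        \<Longrightarrow> disk_filled G xs"
| split: "\<lbrakk> i + 2 \<le> j; j < length xs; j + 2 \<le> i + length xs; G (xs ! i) (xs ! j);
           disk_filled G (take (j - i + 1) (drop i xs));
           disk_filled G (take (i + 1) xs @ drop j xs) \<rbrakk>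
        \<Longrightarrow> disk_filled G xs"

end

theory Submission
  imports Defs
begin

lemma link_adj_sym: "link_adj X x a b \<Longrightarrow> link_adj X x b a"
  unfolding link_adj_def link_edge_def by blast

lemma le_adj: "link_edge X x t a b \<Longrightarrow> link_adj X x a b"
  by (auto simp: link_adj_def)

lemma ang_sum: "angular_length w x ts = (\<Sum>i<length ts. w (ts!i) x)"
  unfolding angular_length_def by (simp add: sum_list_sum_nth lessThan_atLeast0)

lemma tri3: "G a b \<Longrightarrow> G b c \<Longrightarrow> G c a \<Longrightarrow> disk_filled G [a,b,c]"
  by (rule disk_filled.tri) auto

lemma f_image:
  assumes "k < n"
  shows "(\<lambda>i. if i < k then i else Suc i) ` {..<n-1} = {..<n} - {k}"
proof
  show "(\<lambda>i. if i < k then i else Suc i) ` {..<n-1} \<subseteq> {..<n} - {k}" using assms by auto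
  show "{..<n} - {k} \<subseteq> (\<lambda>i. if i < k then i else Suc i) ` {..<n-1}"
  proof
    fix y assume y: "y \<in> {..<n} - {k}"
    show "y \<in> (\<lambda>i. if i < k then i else Suc i) ` {..<n-1}"
    proof (cases "y < k")
      case True then show ?thesis using y assms by (auto intro!: image_eqI[of y _ y])
    next
      case False then show ?thesis using y assms by (auto intro!: image_eqI[of y _ "y - 1"])
    qed
  qed
qed

lemma f_inj: "inj_on (\<lambda>i. if i < k then i else Suc i) A"
  by (auto simp: inj_on_def split: if_splits)

lemma reduce:
  assumes lc: "link_cycle X x es ts" and n: "length es = n" "4 \<le> n" and k: "k < n"
  and a: "a = (if k = 0 then n - 1 else k - 1)" and b: "b = (k+1) mod n"
  and t: "link_edge X x t (es!a) (es!b)"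
  and f: "f = (\<lambda>i. if i < k then i else Suc i)"
  and p: "p = (if k = 0 then n - 2 else k - 1)"
  shows "link_cycle X x (map (\<lambda>i. es ! f i) [0..<n-1]) (map (\<lambda>i. if i = p then t else ts ! f i) [0..<n-1])"
proof -
  have d: "distinct es" and L: "\<And>i. i < n \<Longrightarrow> link_edge X x (ts ! i) (es ! i) (es ! ((i + 1) mod n))"
    and lt: "length ts = n"
    using lc n unfolding link_cycle_def by auto
  have m0: "Suc (n - 2) mod (n - 1) = 0" "Suc (n - Suc (Suc 0)) mod (n - Suc 0) = 0"
      "Suc (Suc (n - 2)) mod n = 0"
      using n(2) by (simp_all add: Suc_diff_Suc numeral_2_eq_2)
  have fl: "f i < n" if "i < n - 1" for i using that f by auto
  have inj: "inj_on (\<lambda>i. es ! f i) (set [0..<n-1])"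
  proof (rule inj_onI)
    fix i j assume "i \<in> set [0..<n-1]" "j \<in> set [0..<n-1]" "es ! f i = es ! f j"
    then have "f i = f j" using d n fl[of i] fl[of j] nth_eq_iff_index_eq[OF d, of "f i" "f j"] \<open>i \<in> set [0..<n-1]\<close> \<open>j \<in> set [0..<n-1]\<close> by auto
    then show "i = j" using f by (auto split: if_splits)
  qed
  have edge: "link_edge X x (if i = p then t else ts ! f i) (es ! f i) (es ! f ((i + 1) mod (n - 1)))"
    if i: "i < n - 1" for i
  proof (cases "i = p")
    case True
    have "f i = a" using True f p a n k by auto
    moreover have "f ((i + 1) mod (n - 1)) = b" using True f p b n k m0
      by (cases "k = 0"; cases "k = n - 1") auto
    ultimately show ?thesis using True t by simp
  next
    case False
    have "f ((i + 1) mod (n - 1)) = (f i + 1) mod n"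
    proof (cases "i + 1 < n - 1")
      case True
      then show ?thesis using False f p n k by auto
    next
      case False2: False
      then have "i = n - 2" using i by auto
      then show ?thesis using False f p n k m0 by (cases "k = 0") auto
    qed
    then show ?thesis using False L[OF fl[OF i]] by simp
  qed
  show ?thesis unfolding link_cycle_def
  proof (intro conjI allI impI)
    fix i assume "i < length (map (\<lambda>i. es ! f i) [0..<n-1])"
    then have i: "i < n - 1" by simp
    have "(i + 1) mod (n - 1) < n - 1" using n by simp
    then show "link_edge X x (map (\<lambda>i. if i = p then t else ts ! f i) [0..<n-1] ! i)
      (map (\<lambda>i. es ! f i) [0..<n-1] ! i)
      (map (\<lambda>i. es ! f i) [0..<n-1] ! ((i + 1) mod length (map (\<lambda>i. es ! f i) [0..<n-1])))"
      using edge[OF i] i by (cases "i = p") auto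
  qed (use n lt inj in \<open>auto simp: distinct_map\<close>)
qed

lemma reduce_sum:
  fixes g :: "'t \<Rightarrow> real"
  assumes n: "4 \<le> n" and k: "k < n"
  and a: "a = (if k = 0 then n - 1 else k - 1)"
  and f: "f = (\<lambda>i. if i < k then i else Suc i)"
  and p: "p = (if k = 0 then n - 2 else k - 1)"
  and tri: "g t \<le> g (ts!a) + g (ts!k)"
  shows "(\<Sum>i<n-1. g (map (\<lambda>i. if i = p then t else ts ! f i) [0..<n-1] ! i)) \<le> (\<Sum>i<n. g (ts!i))"
proof -
  have pl: "p \<in> {..<n-1}" using p n k by auto
  have fp: "f p = a" using f p a n k by auto
  have "(\<Sum>i<n-1. g (map (\<lambda>i. if i = p then t else ts ! f i) [0..<n-1] ! i))
      = (\<Sum>i<n-1. (if i = p then g t else g (ts ! f i)))"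
    by (rule sum.cong) auto
  also have "\<dots> = g t + (\<Sum>i\<in>{..<n-1} - {p}. (if i = p then g t else g (ts ! f i)))"
    using pl by (subst sum.remove[of _ p]) auto
  also have "(\<Sum>i\<in>{..<n-1} - {p}. (if i = p then g t else g (ts ! f i)))
      = (\<Sum>i\<in>{..<n-1} - {p}. g (ts ! f i))" by (rule sum.cong) auto
  also have "\<dots> = (\<Sum>i<n-1. g (ts ! f i)) - g (ts ! a)"
    using pl fp by (subst sum.remove[of _ p]) auto
  also have "(\<Sum>i<n-1. g (ts ! f i)) = (\<Sum>i\<in>{..<n} - {k}. g (ts ! i))"
  proof -
    have "(\<Sum>i\<in>f ` {..<n-1}. g (ts ! i)) = (\<Sum>i<n-1. g (ts ! f i))"
      using f f_inj[of k "{..<n-1}"] by (subst sum.reindex) auto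
    then show ?thesis using f f_image[OF k] by simp
  qed
  also have "\<dots> = (\<Sum>i<n. g (ts ! i)) - g (ts ! k)"
    using k by (subst sum_diff1) auto
  finally show ?thesis using tri by simp
qed

lemma pred_eq: assumes "i < (n::nat)" "k = (i+1) mod n" shows "i = (if k = 0 then n - 1 else k - 1)"
  using assms
proof (cases "i + 1 < n")
  case False
  then have "Suc i = n" using assms by simp
  then show ?thesis using assms by simp
qed auto

lemma main:
  assumes S: "strictly_systolic_angled X w" and xv: "x \<in> verts X"
  shows "link_cycle X x es ts \<Longrightarrow> 2 * pi \<le> angular_length w x ts \<or> disk_filled (link_adj X x) es"
proof (induction "length es" arbitrary: es ts rule: less_induct)
  case less
  define n where "n = length es"
  have L: "\<And>i. i < n \<Longrightarrow> link_edge X x (ts ! i) (es ! i) (es ! ((i + 1) mod n))"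
    and lt: "length ts = n" and d: "distinct es" and n3: "3 \<le> n"
    using less.prems unfolding link_cycle_def n_def by auto
  consider (three) "n = 3" | (full) "3 < n" "two_full X x es" | (nfull) "3 < n" "\<not> two_full X x es"
    using n3 by linarith
  then show ?case
  proof cases
    case three
    have "disk_filled (link_adj X x) es"
      by (rule disk_filled.tri) (use three L[of 0] L[of 1] L[of 2] n_def in \<open>auto intro: le_adj simp: numeral_2_eq_2\<close>)
    then show ?thesis ..
  next
    case full
    then show ?thesis using S xv less.prems unfolding strictly_systolic_angled_def locally_2pi_large_def
      by blast
  next
    case nfull
    then obtain i j k where ijk: "i < n" "j < n" "k < n" "i \<noteq> j" "cyc_nbr n i k" "cyc_nbr n j k"
      "link_adj X x (es ! i) (es ! j)"
      unfolding two_full_def n_def by blast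
    define a where "a = (if k = 0 then n - 1 else k - 1)"
    define b where "b = (k + 1) mod n"
    have ij: "(i = a \<and> j = b) \<or> (i = b \<and> j = a)"
      using ijk pred_eq[of i n k] pred_eq[of j n k] unfolding cyc_nbr_def a_def b_def by auto
    have "link_adj X x (es ! a) (es ! b)"
      using ij ijk(7) link_adj_sym by auto
    then obtain t where t: "link_edge X x t (es ! a) (es ! b)" unfolding link_adj_def by blast
    have an: "a < n" and ak: "(a + 1) mod n = k" and bn: "b < n" using a_def b_def nfull ijk(3) by auto
    have La: "link_edge X x (ts ! a) (es ! a) (es ! k)" using L[OF an] ak by simp
    have Lk: "link_edge X x (ts ! k) (es ! k) (es ! b)" using L[OF ijk(3)] b_def by simp
    have tri: "w t x \<le> w (ts ! a) x + w (ts ! k) x"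
      using S xv La Lk t unfolding strictly_systolic_angled_def angled_def by blast
    define f where "f = (\<lambda>i::nat. if i < k then i else Suc i)"
    define p where "p = (if k = 0 then n - 2 else k - 1)"
    define es' where "es' = map (\<lambda>i. es ! f i) [0..<n-1]"
    define ts' where "ts' = map (\<lambda>i. if i = p then t else ts ! f i) [0..<n-1]"
    have lc': "link_cycle X x es' ts'"
      unfolding es'_def ts'_def
      by (rule reduce[OF less.prems n_def[symmetric] _ ijk(3) a_def b_def t f_def p_def]) (use nfull in auto)
    have "length es' < length es" using es'_def n_def nfull by simp
    from less.hyps[OF this lc'] have IH: "2 * pi \<le> angular_length w x ts' \<or> disk_filled (link_adj X x) es'" .
    have "angular_length w x ts' \<le> angular_length w x ts"
      unfolding ang_sum ts'_def using reduce_sum[of n k a f p "\<lambda>t. w t x" t ts] nfull ijk(3) a_def f_def p_def tri lt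
      by simp
    moreover
    have "disk_filled (link_adj X x) es" if df: "disk_filled (link_adj X x) es'"
    proof -
      have A0: "link_adj X x (es!a) (es!k)" "link_adj X x (es!k) (es!a)" using La le_adj link_adj_sym by metis+
      have A1: "link_adj X x (es!k) (es!b)" "link_adj X x (es!b) (es!k)" using Lk le_adj link_adj_sym by metis+
      have A2: "link_adj X x (es!a) (es!b)" "link_adj X x (es!b) (es!a)" using t le_adj link_adj_sym by metis+
      consider (k0) "k = 0" | (kl) "k = n - 1" | (km) "0 < k" "k < n - 1" using ijk(3) by linarith
      then show ?thesis
      proof cases
        case k0
        have e1: "take (n - 1 - 1 + 1) (drop 1 es) = es'"
          by (rule nth_equalityI) (use k0 nfull n_def in \<open>auto simp: es'_def f_def\<close>)
        have e2: "take (1 + 1) es @ drop (n - 1) es = [es!k, es!b, es!a]"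
          by (rule nth_equalityI) (use k0 nfull n_def a_def b_def in \<open>auto simp: nth_append less_Suc_eq numeral_3_eq_3\<close>)
        show ?thesis
          by (rule disk_filled.split[of 1 "n - 1"]) (use k0 nfull n_def e1 e2 df A0 A1 A2 a_def b_def in \<open>auto intro: tri3\<close>)
      next
        case kl
        have b0: "b = 0" using b_def kl nfull by simp
        have e1: "take (n - 2 - 0 + 1) (drop 0 es) = es'"
          by (rule nth_equalityI) (use kl nfull n_def in \<open>auto simp: es'_def f_def\<close>)
        have e2: "take (0 + 1) es @ drop (n - 2) es = [es!b, es!a, es!k]"
          by (rule nth_equalityI) (use kl nfull n_def a_def b0 in \<open>auto simp: nth_append less_Suc_eq numeral_3_eq_3\<close>)
        show ?thesis
          by (rule disk_filled.split[of 0 "n - 2"]) (use kl nfull n_def e1 e2 df A0 A1 A2 a_def b0 in \<open>auto intro: tri3 simp: numeral_2_eq_2\<close>)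
      next
        case km
        have e1: "take (k + 1 - (k - 1) + 1) (drop (k - 1) es) = [es!a, es!k, es!b]"
          by (rule nth_equalityI) (use km nfull n_def a_def b_def in \<open>auto simp: less_Suc_eq numeral_3_eq_3\<close>)
        have e2: "take (k - 1 + 1) es @ drop (k + 1) es = es'"
          by (rule nth_equalityI) (use km nfull n_def in \<open>auto simp: es'_def f_def nth_append\<close>)
        show ?thesis
          by (rule disk_filled.split[of "k - 1" "k + 1"]) (use km nfull n_def e1 e2 df A0 A1 A2 a_def b_def in \<open>auto intro: tri3\<close>)
      qed
    qed
    ultimately show ?thesis using IH by linarith
  qed
qed

theorem lemma2p5:
  fixes X :: "('v, 'e, 't, 'h) qcomplex" and w :: "'t \<Rightarrow> 'v \<Rightarrow> real"
    and x :: 'v and es :: "'e list" and ts :: "'t list"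
  assumes "strictly_systolic_angled X w"
    and "x \<in> verts X"
    and "link_cycle X x es ts"
  shows "2 * pi \<le> angular_length w x ts \<or> disk_filled (link_adj X x) es"
  using main[OF assms(1,2) assms(3)] .

end
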